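(* In the multi-parameter setting described in the context, for every $\theta\in\Theta$, $$(C_\Upsilon)_{kl}=\sum_{i:p_i>0}\frac{1}{p_i}\frac{\partial p_i}{\partial\theta^k}\frac{\partial p_i}{\partial\theta^l}+4\,\mathrm{Re}\sum_{i<j}(p_i+p_j)\langle w_i^{(k)}|w_j\rangle\langle w_j|w_i^{(l)}\rangle+4\sum_{i:p_i>0}p_i\langle w_i^{(k)}|w_i\rangle\langle w_i|w_i^{(l)}\rangle,$$ where $|w_i^{(k)}\rangle=\partial|w_i\rangle/\partial\theta^k$.
   Context: Let $\Theta\subseteq\mathbb{R}^p$ be open and $D\ge1$. For $\theta\in\Theta$ let $\Phi_\theta$ be a quantum channel on $D\times D$ complex matrices and $\rho_0=|\psi_0\rangle\langle\psi_0|$ a fixed pure input state. Canonical Kraus operators are $D\times D$ matrices $\Upsilon_1(\theta),\dots,\Upsilon_D(\theta)$, differentiable in $\theta$, with $\sum_k\Upsilon_k^\dagger\Upsilon_k=\mathbb{I}$, $\Phi_\theta(\rho)=\sum_k\Upsilon_k\rho\Upsilon_k^\dagger$, and $\mathrm{tr}\{\Upsilon_k\rho_0\Upsilon_j^\dagger\}=\delta_{jk}p_k(\theta)$. Write $\Upsilon_k(\theta)|\psi_0\rangle=\sqrt{p_k(\theta)}|w_k(\theta)\rangle$ with $\{|w_k(\theta)\rangle\}$ an orthonormal basis of $\mathbb{C}^D$ differentiable in $\theta$. Each $p_k$ is assumed either identically zero or strictly positive on $\Theta$. The multi-parameter Sarovar–Milburn bound is the $p\times p$ matrix $(C_\Upsilon)_{kl}=4\sum_i\mathrm{Re}\,\mathrm{tr}\{\frac{\partial\Upsilon_i}{\partial\theta^k}\rho_0(\frac{\partial\Upsilon_i}{\partial\theta^l})^\dagger\}$.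 *)

theory Defs
  imports "HOL-Analysis.Analysis"
begin

text \<open>Complex D-dimensional vectors are \<open>complex ^ 'd\<close>, D x D complex matrices are
  \<open>complex ^ 'd ^ 'd\<close> (D = CARD('d)); parameters theta live in \<open>real ^ 'p\<close> (p = CARD('p)).\<close>

definition braket :: "complex ^ 'd \<Rightarrow> complex ^ 'd \<Rightarrow> complex" where
  "braket x y = (\<Sum>i\<in>UNIV. cnj (x $ i) * y $ i)"

definition adj :: "complex ^ 'd ^ 'd \<Rightarrow> complex ^ 'd ^ 'd" where
  "adj A = (\<chi> i j. cnj (A $ j $ i))"

definition mtrace :: "complex ^ 'd ^ 'd \<Rightarrow> complex" where
  "mtrace A = (\<Sum>i\<in>UNIV. A $ i $ i)"

definition proj :: "complex ^ 'd \<Rightarrow> complex ^ 'd ^ 'd" where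
  "proj psi = (\<chi> i j. psi $ i * cnj (psi $ j))"

definition pderiv_at :: "(real ^ 'p \<Rightarrow> 'b::real_normed_vector) \<Rightarrow> real ^ 'p \<Rightarrow> 'p \<Rightarrow> 'b" where
  "pderiv_at f theta k = frechet_derivative f (at theta) (axis k 1)"

definition C_Upsilon ::
  "('d \<Rightarrow> real ^ 'p \<Rightarrow> complex ^ 'd ^ 'd) \<Rightarrow> complex ^ 'd \<Rightarrow> real ^ 'p \<Rightarrow> 'p \<Rightarrow> 'p \<Rightarrow> real" where
  "C_Upsilon Ups psi0 theta k l =
     4 * (\<Sum>i\<in>UNIV. Re (mtrace (pderiv_at (Ups i) theta k ** proj psi0 ** adj (pderiv_at (Ups i) theta l))))"

end

theory Submission
  imports Defs
begin


lemma braket_cnj: "cnj (braket x y) = braket y x"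
  by (simp add: braket_def mult.commute)

lemma braket_add_left: "braket (x + y) z = braket x z + braket y z"
  by (simp add: braket_def sum.distrib distrib_right)
lemma braket_add_right: "braket z (x + y) = braket z x + braket z y"
  by (simp add: braket_def sum.distrib distrib_left)
lemma braket_scale_left: "braket (c *s x) z = cnj c * braket x z"
  by (simp add: braket_def sum_distrib_left mult.assoc)
lemma braket_scale_right: "braket z (c *s x) = c * braket z x"
  by (simp add: braket_def sum_distrib_left algebra_simps)

lemma trace_proj: "mtrace (A ** proj psi ** adj B) = braket (B *v psi) (A *v psi)"
proof -
  have "mtrace (A ** proj psi ** adj B) = (\<Sum>i\<in>UNIV. \<Sum>m\<in>UNIV. \<Sum>j\<in>UNIV. A $ i $ j * psi $ j * cnj (psi $ m) * cnj (B $ i $ m))"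
    by (simp add: mtrace_def matrix_matrix_mult_def proj_def adj_def sum_distrib_left sum_distrib_right mult.assoc)
  also have "\<dots> = braket (B *v psi) (A *v psi)"
    by (simp add: braket_def matrix_vector_mult_def sum_distrib_left sum_distrib_right mult_ac)
  finally show ?thesis .
qed

lemma parseval:
  fixes w :: "'d::finite \<Rightarrow> complex ^ 'd"
  assumes on: "\<And>i j. braket (w i) (w j) = (if i = j then 1 else 0)"
  shows "braket x y = (\<Sum>j\<in>UNIV. braket x (w j) * braket (w j) y)"
proof -
  define W :: "complex ^'d^'d" where "W = (\<chi> a j. w j $ a)"
  have "adj W ** W = mat 1"
    using on by (simp add: W_def adj_def matrix_matrix_mult_def mat_def braket_def vec_eq_iff)
  hence "W ** adj W = mat 1" using matrix_left_right_inverse by blast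
  hence WW: "(\<Sum>j\<in>UNIV. w j $ a * cnj (w j $ b)) = (if a = b then 1 else 0)" for a b
    by (simp add: W_def adj_def matrix_matrix_mult_def mat_def vec_eq_iff)
  have "(\<Sum>j\<in>UNIV. braket x (w j) * braket (w j) y)
      = (\<Sum>a\<in>UNIV. \<Sum>b\<in>UNIV. cnj (x $ a) * y $ b * (\<Sum>j\<in>UNIV. w j $ a * cnj (w j $ b)))"
    by (simp add: braket_def sum_distrib_left sum_distrib_right mult_ac)
       (subst sum.swap, rule sum.cong, simp, subst sum.swap, simp)
  also have "\<dots> = braket x y"
    by (simp add: WW braket_def if_distrib cong: if_cong)
  finally show ?thesis by simp
qed


lemma braket_has_derivative:
  assumes "(f has_derivative f') (at x)" "(g has_derivative g') (at x)"
  shows "((\<lambda>t. braket (f t) (g t)) has_derivative (\<lambda>h. braket (f' h) (g x) + braket (f x) (g' h))) (at x)"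
proof -
  have c: "((\<lambda>t. f t $ a) has_derivative (\<lambda>h. f' h $ a)) (at x)"
      "((\<lambda>t. g t $ a) has_derivative (\<lambda>h. g' h $ a)) (at x)" for a
    using bounded_linear.has_derivative[OF bounded_linear_vec_nth assms(1)]
          bounded_linear.has_derivative[OF bounded_linear_vec_nth assms(2)] by auto
  have "((\<lambda>t. \<Sum>a\<in>UNIV. cnj (f t $ a) * g t $ a) has_derivative
     (\<lambda>h. \<Sum>a\<in>UNIV. cnj (f x $ a) * (g' h $ a) + cnj (f' h $ a) * g x $ a)) (at x)"
    by (intro has_derivative_sum has_derivative_mult has_derivative_cnj c)
  moreover have "(\<lambda>h. \<Sum>a\<in>UNIV. cnj (f x $ a) * (g' h $ a) + cnj (f' h $ a) * g x $ a)
      = (\<lambda>h. braket (f' h) (g x) + braket (f x) (g' h))"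
    by (simp add: braket_def sum.distrib add.commute)
  ultimately show ?thesis by (simp add: braket_def)
qed

lemma bl_mv: "bounded_linear (\<lambda>A::complex^'d^'d. A *v v)"
proof -
  have "linear (\<lambda>A::complex^'d^'d. A *v v)"
    by (rule linearI) (simp_all add: matrix_vector_mult_def vec_eq_iff scaleR_sum_right
        distrib_right sum.distrib)
  thus ?thesis by (simp add: linear_conv_bounded_linear)
qed

lemma comb:
  fixes R :: "'d::{finite,linorder} \<Rightarrow> 'd \<Rightarrow> real" and P :: "'d \<Rightarrow> real"
  assumes sym: "\<And>i j. R j i = R i j"
  shows "(\<Sum>i\<in>UNIV. \<Sum>j\<in>UNIV. P i * R i j) = (\<Sum>i\<in>UNIV. P i * R i i)
     + (\<Sum>(i,j)\<in>{(i,j). i < j}. (P i + P j) * R i j)"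
proof -
  let ?f = "\<lambda>(i,j). P i * R i j"
  let ?A = "{(i::'d,j). i < j}" and ?D = "{(i::'d,j). i = j}" and ?A' = "{(i::'d,j). j < i}"
  have U: "UNIV = ?A \<union> (?D \<union> ?A')" by auto
  have "(\<Sum>i\<in>UNIV. \<Sum>j\<in>UNIV. P i * R i j) = sum ?f UNIV"
    by (simp add: sum.cartesian_product)
  also have "\<dots> = sum ?f ?A + (sum ?f ?D + sum ?f ?A')"
    unfolding U by (subst sum.union_disjoint, auto, subst sum.union_disjoint, auto)
  also have "sum ?f ?D = (\<Sum>i\<in>UNIV. P i * R i i)"
  proof -
    have "?D = (\<lambda>i. (i,i)) ` UNIV" by auto
    thus ?thesis by (simp add: sum.reindex inj_on_def)
  qed
  also have "sum ?f ?A' = (\<Sum>(i,j)\<in>?A. P j * R i j)"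
  proof -
    have "?A' = prod.swap ` ?A" by auto
    hence "sum ?f ?A' = sum (?f \<circ> prod.swap) ?A" by (simp add: sum.reindex)
    thus ?thesis by (simp add: case_prod_unfold sym)
  qed
  finally show ?thesis
    by (simp add: sum.distrib[symmetric] case_prod_unfold distrib_right)
qed


theorem proposition3p6:
  fixes Theta :: "(real ^ 'p) set"
    and Ups :: "'d::{finite,linorder} \<Rightarrow> real ^ 'p \<Rightarrow> ((complex, 'd) vec, 'd) vec"
    and psi0 :: "(complex, 'd) vec"
    and p :: "'d \<Rightarrow> real ^ 'p \<Rightarrow> real"
    and w :: "'d \<Rightarrow> real ^ 'p \<Rightarrow> (complex, 'd) vec"
  assumes Theta_open: "open Theta"
    and psi0_pure: "braket psi0 psi0 = 1"
    and Ups_diff: "\<And>i theta. theta \<in> Theta \<Longrightarrow> Ups i differentiable (at theta)"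
    and Ups_complete: "\<And>theta. theta \<in> Theta \<Longrightarrow> (\<Sum>i\<in>UNIV. adj (Ups i theta) ** Ups i theta) = mat 1"
    and Ups_canonical: "\<And>theta j k. theta \<in> Theta \<Longrightarrow>
           mtrace (Ups k theta ** proj psi0 ** adj (Ups j theta)) = (if j = k then complex_of_real (p k theta) else 0)"
    and Ups_psi0: "\<And>theta k. theta \<in> Theta \<Longrightarrow>
           Ups k theta *v psi0 = complex_of_real (sqrt (p k theta)) *s w k theta"
    and w_orthonormal: "\<And>theta i j. theta \<in> Theta \<Longrightarrow>
           braket (w i theta) (w j theta) = (if i = j then 1 else 0)"
    and w_diff: "\<And>i theta. theta \<in> Theta \<Longrightarrow> w i differentiable (at theta)"
    and p_dichotomy: "\<And>i. (\<forall>theta\<in>Theta. p i theta = 0) \<or> (\<forall>theta\<in>Theta. p i theta > 0)"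
    and theta_in: "theta \<in> Theta"
  shows "complex_of_real (C_Upsilon Ups psi0 theta k l) =
      complex_of_real (\<Sum>i\<in>{i. p i theta > 0}.
          1 / p i theta * pderiv_at (p i) theta k * pderiv_at (p i) theta l)
    + complex_of_real (4 * Re (\<Sum>(i, j)\<in>{(i, j). i < j}.
          complex_of_real (p i theta + p j theta)
          * braket (pderiv_at (w i) theta k) (w j theta)
          * braket (w j theta) (pderiv_at (w i) theta l)))
    + 4 * (\<Sum>i\<in>{i. p i theta > 0}.
          complex_of_real (p i theta)
          * braket (pderiv_at (w i) theta k) (w i theta)
          * braket (w i theta) (pderiv_at (w i) theta l))"
proof -
  define U' where "U' i = frechet_derivative (Ups i) (at theta)" for i
  define W' where "W' i = frechet_derivative (w i) (at theta)" for i
  have hU: "(Ups i has_derivative U' i) (at theta)" for i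
    using Ups_diff[OF theta_in, of i] unfolding U'_def frechet_derivative_works .
  have hW: "(w i has_derivative W' i) (at theta)" for i
    using w_diff[OF theta_in, of i] unfolding W'_def frechet_derivative_works .
  define G where "G i t = Ups i t *v psi0" for i t
  have hG: "(G i has_derivative (\<lambda>h. U' i h *v psi0)) (at theta)" for i
    unfolding G_def by (rule bounded_linear.has_derivative[OF bl_mv hU])
  define s where "s i t = Re (braket (w i t) (G i t))" for i t
  define S' where "S' i h = Re (braket (W' i h) (G i theta) + braket (w i theta) (U' i h *v psi0))" for i h
  have hs: "(s i has_derivative S' i) (at theta)" for i
    unfolding s_def S'_def by (intro has_derivative_Re braket_has_derivative hW hG)
  have bnn: "Re (braket x x) \<ge> 0" for x :: "complex^'d::{finite,linorder}"
    by (simp add: braket_def sum_nonneg)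
  have pnn: "p i t \<ge> 0" if "t \<in> Theta" for i t
  proof -
    have "complex_of_real (p i t) = braket (G i t) (G i t)"
      using Ups_canonical[OF that, of i i] by (simp add: trace_proj G_def)
    hence "p i t = Re (braket (G i t) (G i t))" by (metis Re_complex_of_real)
    thus ?thesis using bnn by simp
  qed
  have Geq: "G i t = complex_of_real (s i t) *s w i t" and seq: "s i t = sqrt (p i t)"
    and peq: "p i t = s i t * s i t" if "t \<in> Theta" for i t
  proof -
    have G1: "G i t = complex_of_real (sqrt (p i t)) *s w i t"
      using Ups_psi0[OF that] by (simp add: G_def)
    show s1: "s i t = sqrt (p i t)"
      unfolding s_def G1 braket_scale_right using w_orthonormal[OF that, of i i] by simp
    show "G i t = complex_of_real (s i t) *s w i t" using G1 s1 by simp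
    show "p i t = s i t * s i t" using s1 pnn[OF that] by simp
  qed
  have DG: "U' i h *v psi0 = complex_of_real (S' i h) *s w i theta + complex_of_real (s i theta) *s W' i h" for i h
  proof -
    have "(U' i h *v psi0) $ a = complex_of_real (s i theta) * (W' i h $ a) + complex_of_real (S' i h) * w i theta $ a" for a
    proof -
      have c1: "((\<lambda>t. G i t $ a) has_derivative (\<lambda>h. (U' i h *v psi0) $ a)) (at theta)"
        using bounded_linear.has_derivative[OF bounded_linear_vec_nth hG] .
      have cw: "((\<lambda>t. w i t $ a) has_derivative (\<lambda>h. W' i h $ a)) (at theta)"
        using bounded_linear.has_derivative[OF bounded_linear_vec_nth hW] .
      have "((\<lambda>t. complex_of_real (s i t) * w i t $ a) has_derivative
          (\<lambda>h. complex_of_real (s i theta) * (W' i h $ a) + complex_of_real (S' i h) * w i theta $ a)) (at theta)"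
        by (intro has_derivative_mult has_derivative_of_real hs cw)
      hence "((\<lambda>t. G i t $ a) has_derivative
          (\<lambda>h. complex_of_real (s i theta) * (W' i h $ a) + complex_of_real (S' i h) * w i theta $ a)) (at theta)"
        by (rule has_derivative_transform_within_open[OF _ Theta_open theta_in]) (simp add: Geq)
      from has_derivative_unique[OF c1 this] show ?thesis by metis
    qed
    thus ?thesis by (simp add: vec_eq_iff)
  qed
  have OD: "braket (W' i h) (w j theta) + braket (w i theta) (W' j h) = 0" for i j h
  proof -
    have d1: "((\<lambda>t. braket (w i t) (w j t)) has_derivative
        (\<lambda>h. braket (W' i h) (w j theta) + braket (w i theta) (W' j h))) (at theta)"
      by (intro braket_has_derivative hW)
    have "((\<lambda>t. braket (w i t) (w j t)) has_derivative (\<lambda>h. 0)) (at theta)"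
      by (rule has_derivative_transform_within_open[OF has_derivative_const Theta_open theta_in])
         (simp add: w_orthonormal)
    from has_derivative_unique[OF d1 this] show ?thesis by metis
  qed
  have R1: "Re (braket (w i theta) (W' i h)) = 0" "Re (braket (W' i h) (w i theta)) = 0" for i h
  proof -
    have "Re (braket (W' i h) (w i theta)) + Re (braket (w i theta) (W' i h)) = 0"
      using arg_cong[OF OD[of i h i], of Re] by simp
    moreover have "Re (braket (W' i h) (w i theta)) = Re (braket (w i theta) (W' i h))"
      by (subst braket_cnj[symmetric]) simp
    ultimately show "Re (braket (w i theta) (W' i h)) = 0" "Re (braket (W' i h) (w i theta)) = 0" by auto
  qed
  have S0: "S' i = (\<lambda>h. 0)" if "\<not> p i theta > 0" for i
  proof -
    have "\<forall>t\<in>Theta. p i t = 0" using p_dichotomy[of i] that theta_in by auto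
    hence "((s i) has_derivative (\<lambda>h. 0)) (at theta)"
      by (intro has_derivative_transform_within_open[OF has_derivative_const Theta_open theta_in])
         (simp add: seq)
    from has_derivative_unique[OF hs this] show ?thesis .
  qed
  have dp: "pderiv_at (p i) theta k = 2 * s i theta * S' i (axis k 1)" for i k
  proof -
    have "((\<lambda>t. s i t * s i t) has_derivative (\<lambda>h. s i theta * S' i h + S' i h * s i theta)) (at theta)"
      by (intro has_derivative_mult hs)
    hence hp: "(p i has_derivative (\<lambda>h. s i theta * S' i h + S' i h * s i theta)) (at theta)"
      by (rule has_derivative_transform_within_open[OF _ Theta_open theta_in]) (simp add: peq)
    show ?thesis unfolding pderiv_at_def frechet_derivative_at[OF hp, symmetric] by simp
  qed
  define ek where "ek = (axis k 1 :: real^'p)"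
  define el where "el = (axis l 1 :: real^'p)"
  define P where "P i = p i theta" for i
  define B where "B i j = braket (W' i ek) (w j theta) * braket (w j theta) (W' i el)" for i j
  have pw: "pderiv_at (w i) theta k = W' i ek" "pderiv_at (w i) theta l = W' i el" for i
    by (simp_all add: pderiv_at_def W'_def ek_def el_def)
  have Ci: "Re (braket (U' i el *v psi0) (U' i ek *v psi0)) = S' i el * S' i ek + P i * Re (\<Sum>j\<in>UNIV. B i j)" for i
  proof -
    have "Re (braket (U' i el *v psi0) (U' i ek *v psi0)) = S' i el * S' i ek + (s i theta * s i theta) * Re (braket (W' i el) (W' i ek))"
      unfolding DG using R1[of i] w_orthonormal[OF theta_in, of i i]
      by (simp add: braket_add_left braket_add_right braket_scale_left braket_scale_right algebra_simps)
    also have "Re (braket (W' i el) (W' i ek)) = Re (braket (W' i ek) (W' i el))"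
      by (subst braket_cnj[symmetric]) simp
    also have "braket (W' i ek) (W' i el) = (\<Sum>j\<in>UNIV. B i j)"
      unfolding B_def by (rule parseval) (simp add: w_orthonormal[OF theta_in])
    finally show ?thesis using peq[OF theta_in] by (simp add: P_def)
  qed
  have C: "C_Upsilon Ups psi0 theta k l = 4 * (\<Sum>i\<in>UNIV. S' i el * S' i ek + P i * (\<Sum>j\<in>UNIV. Re (B i j)))"
    unfolding C_Upsilon_def pderiv_at_def trace_proj using Ci
    by (simp add: U'_def[symmetric] ek_def[symmetric] el_def[symmetric])
  have T1: "(\<Sum>i\<in>{i. p i theta > 0}. 1 / p i theta * pderiv_at (p i) theta k * pderiv_at (p i) theta l)
     = (\<Sum>i\<in>UNIV. 4 * (S' i el * S' i ek))"
  proof -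
    have "(\<Sum>i\<in>{i. p i theta > 0}. 1 / p i theta * pderiv_at (p i) theta k * pderiv_at (p i) theta l)
        = (\<Sum>i\<in>{i. p i theta > 0}. 4 * (S' i el * S' i ek))"
    proof (rule sum.cong)
      fix i assume "i \<in> {i. p i theta > 0}"
      hence "s i theta * s i theta > 0" using peq[OF theta_in] by simp
      hence "s i theta \<noteq> 0" by auto
      thus "1 / p i theta * pderiv_at (p i) theta k * pderiv_at (p i) theta l = 4 * (S' i el * S' i ek)"
        unfolding dp peq[OF theta_in] ek_def el_def by (simp add: field_simps)
    qed simp
    also have "\<dots> = (\<Sum>i\<in>UNIV. 4 * (S' i el * S' i ek))"
      by (rule sum.mono_neutral_left) (auto simp: S0)
    finally show ?thesis .
  qed
  have symB: "Re (B j i) = Re (B i j)" for i j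
  proof -
    have e1: "braket (W' j ek) (w i theta) = - braket (w j theta) (W' i ek)"
      using OD[of j ek i] by (simp add: eq_neg_iff_add_eq_0)
    have e2: "braket (w i theta) (W' j el) = - braket (W' i el) (w j theta)"
      using OD[of i el j] by (simp add: eq_neg_iff_add_eq_0 add.commute)
    have "B j i = braket (w j theta) (W' i ek) * braket (W' i el) (w j theta)"
      unfolding B_def e1 e2 by simp
    also have "\<dots> = cnj (B i j)" unfolding B_def by (simp add: braket_cnj)
    finally have "B j i = cnj (B i j)" .
    thus ?thesis by simp
  qed
  have Bdiag: "B i i = complex_of_real (Re (B i i))" for i
  proof -
    have a: "Re (braket (W' i ek) (w i theta)) = 0" "Re (braket (w i theta) (W' i el)) = 0"
      using R1 by auto
    show ?thesis unfolding B_def using a by (simp add: complex_eq_iff)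
  qed
  have T3: "(\<Sum>i\<in>{i. p i theta > 0}. complex_of_real (p i theta)
          * braket (W' i ek) (w i theta) * braket (w i theta) (W' i el))
       = complex_of_real (\<Sum>i\<in>UNIV. P i * Re (B i i))"
  proof -
    have "(\<Sum>i\<in>{i. p i theta > 0}. complex_of_real (p i theta)
          * braket (W' i ek) (w i theta) * braket (w i theta) (W' i el))
        = (\<Sum>i\<in>{i. p i theta > 0}. complex_of_real (P i * Re (B i i)))"
    proof (rule sum.cong)
      fix i
      have bd: "complex_of_real (P i * Re (B i i)) = complex_of_real (P i) * B i i"
        using Bdiag[of i] by (metis of_real_mult)
      show "complex_of_real (p i theta) * braket (W' i ek) (w i theta) * braket (w i theta) (W' i el)
          = complex_of_real (P i * Re (B i i))" unfolding bd by (simp add: B_def P_def mult.assoc)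
    qed simp
    also have "\<dots> = (\<Sum>i\<in>UNIV. complex_of_real (P i * Re (B i i)))"
      using pnn[OF theta_in] by (intro sum.mono_neutral_left) (auto simp: P_def order.order_iff_strict)
    finally show ?thesis by simp
  qed
  have T2: "Re (\<Sum>(i, j)\<in>{(i, j). i < j}. complex_of_real (p i theta + p j theta)
          * braket (W' i ek) (w j theta) * braket (w j theta) (W' i el))
      = (\<Sum>(i, j)\<in>{(i, j). i < j}. (P i + P j) * Re (B i j))"
    by (simp add: case_prod_unfold B_def P_def mult.assoc)
  have main: "C_Upsilon Ups psi0 theta k l = (\<Sum>i\<in>UNIV. 4 * (S' i el * S' i ek))
      + 4 * (\<Sum>(i, j)\<in>{(i, j). i < j}. (P i + P j) * Re (B i j)) + 4 * (\<Sum>i\<in>UNIV. P i * Re (B i i))"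
    unfolding C using comb[of "\<lambda>i j. Re (B i j)" P, OF symB]
    by (simp add: sum.distrib sum_distrib_left algebra_simps)
  show ?thesis
    unfolding pw T1 T2 T3 main by simp
qed

end
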